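(* Let $\tau>0$ and $\mathbf A\in\mathcal S_{++}^n$. A pair $(\mathbf W_\ast,\mathbf M_\ast)$ lies in $\mathcal E$ if and only if $\mathbf W_\ast=\mathbf U\mathbf S\mathbf V^\top$ and $\mathbf M_\ast=\mathbf U\mathbf S\mathbf U^\top$, where: - $\mathbf U$ is a $k\times k$ orthogonal matrix; - $\mathbf V$ is an $n\times k$ matrix whose columns are orthonormal eigenvectors of $\mathbf A$; - $\mathbf S$ is the $k\times k$ diagonal matrix whose $i$-th diagonal entry is the eigenvalue of $\mathbf A$ for the $i$-th column of $\mathbf V$.
   Context: Let $n>k\ge 1$ be integers. Let $\mathbf A$ be an $n\times n$ symmetric positive definite matrix; write $\mathbf A\in\mathcal S_{++}^n$. Here $\mathcal S_{++}^m$ denotes the $m\times m$ symmetric positive definite matrices, and $\mathcal D:=\mathbb R^{k\times n}\times\mathcal S_{++}^k$. For a parameter $\tau>0$, consider the ODE $(\ast)$ on $\mathcal D$: $$\tfrac12\tfrac{d\mathbf W}{dt}=\mathbf M^{-1}\mathbf W\mathbf A-\mathbf W,\qquad \tau\tfrac{d\mathbf M}{dt}=\mathbf M^{-1}\mathbf W\mathbf A\mathbf W^\top\mathbf M^{-1}-\mathbf M.$$ $\mathcal E$ is the set of equilibria of $(\ast)$, i.e. the set of $(\mathbf W,\mathbf M)\in\mathcal D$ with $\mathbf M^{-1}\mathbf W\mathbf A=\mathbf W$ and $\mathbf M^{-1}\mathbf W\mathbf A\mathbf W^\top\mathbf M^{-1}=\mathbf M$. *)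

theory Defs
  imports "HOL-Analysis.Analysis"
begin

definition sym_pos_def :: "real^'m^'m \<Rightarrow> bool" where
  "sym_pos_def A \<longleftrightarrow> transpose A = A \<and> (\<forall>x. x \<noteq> 0 \<longrightarrow> x \<bullet> (A *v x) > 0)"

definition equilibria :: "real^'n^'n \<Rightarrow> ((real^'n^'k) \<times> (real^'k^'k)) set" where
  "equilibria A = {(W, M). sym_pos_def M \<and>
      matrix_inv M ** W ** A = W \<and>
      matrix_inv M ** W ** A ** transpose W ** matrix_inv M = M}"

end

theory Submission
  imports Defs
begin

lemma sym_inner:
  fixes M :: "real^'k^'k"
  assumes "transpose M = M"
  shows "(M *v x) \<bullet> y = x \<bullet> (M *v y)"
proof -
  have "M *v x = x v* transpose M" by simp
  then show ?thesis using assms by (metis dot_lmul_matrix)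
qed

lemma eig_exists:
  fixes M :: "real^'k^'k"
  assumes sym: "transpose M = M"
    and eigB: "\<forall>b\<in>B. \<exists>\<mu>. M *v b = \<mu> *\<^sub>R b"
    and sp: "span B \<noteq> UNIV"
  shows "\<exists>x. norm x = 1 \<and> (\<forall>b\<in>B. b \<bullet> x = 0) \<and> (\<exists>\<mu>. M *v x = \<mu> *\<^sub>R x)"
proof -
  define Wsp where "Wsp = {x. \<forall>b\<in>B. b \<bullet> x = 0}"
  obtain a where a0: "a \<noteq> 0" and aB: "\<forall>x\<in>span B. a \<bullet> x = 0"
    using span_not_UNIV_orthogonal[OF sp] by blast
  have aW: "a \<in> Wsp" unfolding Wsp_def
  proof (intro CollectI ballI)
    fix b assume "b \<in> B"
    then have "a \<bullet> b = 0" using aB span_base by blast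
    then show "b \<bullet> a = 0" by (simp add: inner_commute)
  qed
  have subW: "subspace Wsp" unfolding Wsp_def subspace_def
    by (auto simp: inner_add_right)
  have invW: "M *v x \<in> Wsp" if "x \<in> Wsp" for x
  proof -
    have "b \<bullet> (M *v x) = 0" if "b \<in> B" for b
    proof -
      obtain \<mu> where "M *v b = \<mu> *\<^sub>R b" using eigB \<open>b \<in> B\<close> by blast
      have "b \<bullet> (M *v x) = (M *v b) \<bullet> x" using sym_inner[OF sym] by simp
      also have "\<dots> = \<mu> * (b \<bullet> x)" using \<open>M *v b = \<mu> *\<^sub>R b\<close> by simp
      finally show ?thesis using \<open>x \<in> Wsp\<close> that unfolding Wsp_def by simp
    qed
    then show ?thesis unfolding Wsp_def by blast
  qed
  define K where "K = Wsp \<inter> sphere 0 1"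
  have "closed Wsp" using subW by (simp add: closed_subspace)
  then have cK: "compact K" unfolding K_def by (metis Int_commute compact_Int_closed compact_sphere)
  have a1: "(1 / norm a) *\<^sub>R a \<in> K" unfolding K_def using a0 aW subW
    by (simp add: subspace_scale)
  then have neK: "K \<noteq> {}" by blast
  have "continuous_on K (\<lambda>x. x \<bullet> (M *v x))"
    by (intro continuous_intros)
  then obtain x0 where x0K: "x0 \<in> K" and x0max: "\<forall>y\<in>K. y \<bullet> (M *v y) \<le> x0 \<bullet> (M *v x0)"
    using continuous_attains_sup[OF cK neK] by blast
  define l where "l = x0 \<bullet> (M *v x0)"
  have x0W: "x0 \<in> Wsp" and nx0: "norm x0 = 1" using x0K unfolding K_def by auto
  have x0x0: "x0 \<bullet> x0 = 1" using nx0 power2_norm_eq_inner[of x0] by simp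
  have bound: "z \<bullet> (M *v z) \<le> l * (z \<bullet> z)" if "z \<in> Wsp" for z
  proof (cases "z = 0")
    case True then show ?thesis by simp
  next
    case False
    define c where "c = norm z"
    have c0: "c > 0" using False c_def by simp
    have "(1/c) *\<^sub>R z \<in> K" unfolding K_def using that subW c0 c_def
      by (simp add: subspace_scale)
    then have "((1/c) *\<^sub>R z) \<bullet> (M *v ((1/c) *\<^sub>R z)) \<le> l" using x0max l_def by blast
    then have "(1/c)^2 * (z \<bullet> (M *v z)) \<le> l"
      by (simp add: matrix_vector_mult_scaleR power2_eq_square algebra_simps)
    then have "z \<bullet> (M *v z) \<le> l * c^2" using c0
      by (simp add: field_simps power2_eq_square)
    then show ?thesis by (simp add: c_def power2_norm_eq_inner)
  qed
  define y where "y = M *v x0 - l *\<^sub>R x0"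
  have yW: "y \<in> Wsp" unfolding y_def using invW[OF x0W] x0W subW
    by (simp add: subspace_diff subspace_scale)
  have yx0: "y \<bullet> x0 = 0" unfolding y_def l_def using x0x0
    by (simp add: inner_diff_left inner_diff_right inner_commute)
  have yMx0: "y \<bullet> (M *v x0) = y \<bullet> y"
    unfolding y_def using yx0 y_def by (simp add: inner_diff_right inner_diff_left)
  have "y \<bullet> y = 0"
  proof (rule ccontr)
    assume "y \<bullet> y \<noteq> 0"
    then have yy: "y \<bullet> y > 0" by (simp add: order_less_le)
    define C where "C = l * (y \<bullet> y) - y \<bullet> (M *v y)"
    have key: "2 * t * (y \<bullet> y) \<le> t^2 * C" for t
    proof -
      have "x0 + t *\<^sub>R y \<in> Wsp" using x0W yW subW by (simp add: subspace_add subspace_scale)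
      from bound[OF this] have
        "(x0 + t *\<^sub>R y) \<bullet> (M *v (x0 + t *\<^sub>R y)) \<le> l * ((x0 + t *\<^sub>R y) \<bullet> (x0 + t *\<^sub>R y))" .
      moreover have "x0 \<bullet> (M *v y) = y \<bullet> (M *v x0)"
        using sym_inner[OF sym, of y x0] by (simp add: inner_commute)
      ultimately show ?thesis using yMx0 yx0 x0x0 unfolding C_def l_def
        by (simp add: matrix_vector_right_distrib matrix_vector_mult_scaleR inner_add_left
            inner_add_right inner_commute power2_eq_square algebra_simps)
    qed
    define t where "t = (y \<bullet> y) / (\<bar>C\<bar> + 1)"
    have t0: "t > 0" using yy unfolding t_def by (simp add: add_pos_nonneg)
    have "2 * (y \<bullet> y) \<le> t * C" using key[of t] t0 by (simp add: power2_eq_square)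
    also have "t * C \<le> t * \<bar>C\<bar>" using t0 by (simp add: mult_left_mono)
    also have "\<dots> < y \<bullet> y" unfolding t_def using yy
      by (simp add: field_simps)
    finally show False using yy by simp
  qed
  then have "y = 0" by simp
  then have "M *v x0 = l *\<^sub>R x0" unfolding y_def by simp
  moreover have "\<forall>b\<in>B. b \<bullet> x0 = 0" using x0W unfolding Wsp_def by blast
  ultimately show ?thesis using nx0 by blast
qed


lemma diag_mult_right:
  fixes X S :: "real^'k^'k"
  assumes "\<forall>i j. i \<noteq> j \<longrightarrow> S $ i $ j = 0"
  shows "(X ** S) $ i $ j = X $ i $ j * S $ j $ j"
proof -
  have "(X ** S) $ i $ j = (\<Sum>l\<in>UNIV. X $ i $ l * S $ l $ j)" by (simp add: matrix_matrix_mult_def)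
  also have "\<dots> = (\<Sum>l\<in>UNIV. if l = j then X $ i $ j * S $ j $ j else 0)"
    by (rule sum.cong) (auto simp: assms)
  also have "\<dots> = X $ i $ j * S $ j $ j" by simp
  finally show ?thesis .
qed

lemma spectral:
  fixes M :: "real^'k^'k"
  assumes sym: "transpose M = M"
  shows "\<exists>U S. orthogonal_matrix U \<and> (\<forall>i j. i \<noteq> j \<longrightarrow> S $ i $ j = (0::real)) \<and> M = U ** S ** transpose U"
proof -
  define P where "P B \<longleftrightarrow> (\<forall>b\<in>B. norm b = 1 \<and> (\<exists>\<mu>. M *v b = \<mu> *\<^sub>R b)) \<and> pairwise orthogonal B"
    for B :: "(real^'k) set"
  have indep: "independent B \<and> finite B \<and> card B \<le> CARD('k)" if "P B" for B
  proof -
    have "0 \<notin> B" using that unfolding P_def by force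
    then have "independent B" using pairwise_orthogonal_independent that unfolding P_def by blast
    then show ?thesis using independent_bound[of B] by simp
  qed
  have "P {}" unfolding P_def by simp
  then obtain B where PB: "P B" and Bmax: "\<forall>B'. P B' \<longrightarrow> card B' \<le> card B"
    using Lattices_Big.ex_has_greatest_nat[of P "{}" card "Suc CARD('k)"] indep
    by (metis le_imp_less_Suc)
  have spB: "span B = UNIV"
  proof (rule ccontr)
    assume "span B \<noteq> UNIV"
    moreover have "\<forall>b\<in>B. \<exists>\<mu>. M *v b = \<mu> *\<^sub>R b" using PB unfolding P_def by blast
    ultimately obtain x where nx: "norm x = 1" and xo: "\<forall>b\<in>B. b \<bullet> x = 0"
      and xe: "\<exists>\<mu>. M *v x = \<mu> *\<^sub>R x"
      using eig_exists[OF sym] by blast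
    have xB: "x \<notin> B" using xo nx by (metis inner_eq_zero_iff norm_zero zero_neq_one)
    have "P (insert x B)" using PB nx xo xe unfolding P_def
      by (auto simp: pairwise_insert orthogonal_def inner_commute)
    then have "card (insert x B) \<le> card B" using Bmax by blast
    moreover have "card (insert x B) = Suc (card B)" using xB indep[OF PB] by simp
    ultimately show False by simp
  qed
  have finB: "finite B" and indB: "independent B" using indep[OF PB] by auto
  have "card B = dim (UNIV :: (real^'k) set)"
    using basis_card_eq_dim[of B UNIV] spB indB by simp
  then have cB: "card B = CARD('k)" by simp
  then obtain h where bh: "bij_betw h (UNIV::'k set) B"
    using finite_same_card_bij[of "UNIV::'k set" B] finB by auto
  have hB: "h j \<in> B" for j using bh bij_betwE by blast
  have hinj: "h i = h j \<Longrightarrow> i = j" for i j using bh by (meson bij_betw_imp_inj_on injD)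
  have hn: "h j \<bullet> h j = 1" for j using PB hB[of j] unfolding P_def
    by (metis norm_eq_1)
  have ho: "i \<noteq> j \<Longrightarrow> h i \<bullet> h j = 0" for i j using PB hB[of i] hB[of j] hinj[of i j]
    unfolding P_def pairwise_def orthogonal_def by metis
  define mu where "mu j = (SOME \<mu>. M *v h j = \<mu> *\<^sub>R h j)" for j
  have he: "M *v h j = mu j *\<^sub>R h j" for j
  proof -
    have "\<exists>\<mu>. M *v h j = \<mu> *\<^sub>R h j" using PB hB[of j] unfolding P_def by blast
    then show ?thesis unfolding mu_def by (rule someI_ex)
  qed
  define U :: "real^'k^'k" where "U = (\<chi> i j. h j $ i)"
  define S :: "real^'k^'k" where "S = (\<chi> i j. if i = j then mu j else 0)"
  have Sd: "\<forall>i j. i \<noteq> j \<longrightarrow> S $ i $ j = 0" unfolding S_def by simp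
  have "transpose U ** U = mat 1"
  proof -
    have "(transpose U ** U) $ i $ j = h i \<bullet> h j" for i j
      by (simp add: matrix_matrix_mult_def transpose_def U_def inner_vec_def)
    then show ?thesis using hn ho by (simp add: vec_eq_iff mat_def)
  qed
  then have oU: "orthogonal_matrix U" by (simp add: orthogonal_matrix)
  have MU: "M ** U = U ** S"
  proof -
    have "(M ** U) $ i $ j = (M *v h j) $ i" for i j
      by (simp add: matrix_matrix_mult_def matrix_vector_mult_def U_def)
    moreover have "(U ** S) $ i $ j = mu j * h j $ i" for i j
      using diag_mult_right[OF Sd, of U i j] by (simp add: U_def S_def)
    ultimately show ?thesis using he by (simp add: vec_eq_iff)
  qed
  have "M = M ** (U ** transpose U)" using oU unfolding orthogonal_matrix_def by simp
  also have "\<dots> = U ** S ** transpose U" by (metis MU matrix_mul_assoc)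
  finally show ?thesis using oU Sd by blast
qed


lemma sym_pos_invertible:
  fixes M :: "real^'k^'k"
  assumes "sym_pos_def M"
  shows "invertible M"
proof -
  have "inj ((*v) M)"
  proof (rule injI)
    fix x y assume "M *v x = M *v y"
    then have "M *v (x - y) = 0" by (simp add: matrix_vector_mult_diff_distrib)
    then show "x = y" using assms unfolding sym_pos_def_def by (metis inner_zero_right less_irrefl right_minus_eq)
  qed
  then show ?thesis using matrix_left_invertible_injective invertible_left_inverse by blast
qed

lemma inv_props:
  fixes M :: "real^'k^'k"
  assumes "invertible M"
  shows "M ** matrix_inv M = mat 1" "matrix_inv M ** M = mat 1"
proof -
  have "M ** matrix_inv M = mat 1 \<and> matrix_inv M ** M = mat 1"
    using assms unfolding invertible_def matrix_inv_def by (rule someI_ex)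
  then show "M ** matrix_inv M = mat 1" "matrix_inv M ** M = mat 1" by auto
qed

lemma column_mult: "column i (A ** (V::real^'k^'n)) = (A::real^'n^'n) *v column i V"
  by (simp add: vec_eq_iff column_def matrix_matrix_mult_def matrix_vector_mult_def)

lemma column_eq: "(\<And>i. column i X = column i Y) \<Longrightarrow> X = (Y::real^'k^'n)"
  by (simp add: vec_eq_iff column_def)

lemma diag_transpose:
  fixes S :: "real^'k^'k"
  assumes "\<forall>i j. i \<noteq> j \<longrightarrow> S $ i $ j = 0"
  shows "transpose S = S"
  using assms by (simp add: vec_eq_iff transpose_def) (metis)

lemma diag_column:
  fixes V :: "real^'k^'n" and S :: "real^'k^'k"
  assumes "\<forall>i j. i \<noteq> j \<longrightarrow> S $ i $ j = 0"
  shows "column i (V ** S) = S $ i $ i *\<^sub>R column i V"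
proof -
  have "(V ** S) $ r $ i = V $ r $ i * S $ i $ i" for r
  proof -
    have "(V ** S) $ r $ i = (\<Sum>l\<in>UNIV. V $ r $ l * S $ l $ i)" by (simp add: matrix_matrix_mult_def)
    also have "\<dots> = (\<Sum>l\<in>UNIV. if l = i then V $ r $ i * S $ i $ i else 0)"
      by (rule sum.cong) (auto simp: assms)
    also have "\<dots> = V $ r $ i * S $ i $ i" by simp
    finally show ?thesis .
  qed
  then show ?thesis by (simp add: vec_eq_iff column_def mult.commute)
qed


theorem lemma1:
  fixes A :: "real^'n^'n" and W :: "real^'n^'k" and M :: "real^'k^'k" and \<tau> :: real
  assumes "CARD('k) < CARD('n)"
    and "\<tau> > 0"
    and "sym_pos_def A"
  shows "(W, M) \<in> equilibria A \<longleftrightarrow>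
    (\<exists>(U :: real^'k^'k) (V :: real^'k^'n) (S :: real^'k^'k).
       orthogonal_matrix U \<and>
       transpose V ** V = mat 1 \<and>
       (\<forall>i j. i \<noteq> j \<longrightarrow> S $ i $ j = 0) \<and>
       (\<forall>i. A *v column i V = S $ i $ i *\<^sub>R column i V) \<and>
       W = U ** S ** transpose V \<and>
       M = U ** S ** transpose U)"
proof
  have As: "transpose A = A" using assms(3) unfolding sym_pos_def_def by blast
  assume "(W, M) \<in> equilibria A"
  then have Mp: "sym_pos_def M" and h1: "matrix_inv M ** W ** A = W"
    and h2: "matrix_inv M ** W ** A ** transpose W ** matrix_inv M = M"
    unfolding equilibria_def by auto
  define Mi where "Mi = matrix_inv M"
  have Ms: "transpose M = M" using Mp unfolding sym_pos_def_def by blast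
  have MMi: "M ** Mi = mat 1" and MiM: "Mi ** M = mat 1"
    using inv_props[OF sym_pos_invertible[OF Mp]] Mi_def by auto
  have h1': "Mi ** W ** A = W" using h1 Mi_def by simp
  have "W ** transpose W ** Mi = M" using h2 h1' Mi_def by simp
  then have "W ** transpose W ** Mi ** M = M ** M" by simp
  then have WW: "W ** transpose W = M ** M" by (metis MiM matrix_mul_assoc matrix_mul_rid)
  define Q where "Q = Mi ** W"
  have MQ: "M ** Q = W" unfolding Q_def by (metis MMi matrix_mul_assoc matrix_mul_lid)
  have QA: "Q ** A = M ** Q" using MQ h1' Q_def by simp
  have QQ: "Q ** transpose Q = mat 1"
  proof -
    have "Q ** transpose Q = Mi ** (W ** transpose W) ** transpose Mi"
      unfolding Q_def by (simp add: matrix_transpose_mul matrix_mul_assoc)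
    also have "\<dots> = (Mi ** M) ** M ** transpose Mi" by (simp add: WW matrix_mul_assoc)
    also have "\<dots> = transpose (Mi ** transpose M)" by (simp add: MiM matrix_transpose_mul)
    also have "\<dots> = mat 1" using Ms MiM by simp
    finally show ?thesis .
  qed
  obtain U S where oU: "orthogonal_matrix U" and Sd: "\<forall>i j. i \<noteq> j \<longrightarrow> S $ i $ j = (0::real)"
    and MU: "M = U ** S ** transpose U" using spectral[OF Ms] by blast
  have UtU: "transpose U ** U = mat 1" using oU unfolding orthogonal_matrix_def by simp
  have MU2: "M ** U = U ** S" unfolding MU by (metis UtU matrix_mul_assoc matrix_mul_rid)
  define V where "V = transpose Q ** U"
  have tV: "transpose V = transpose U ** Q" unfolding V_def by (simp add: matrix_transpose_mul)
  have "transpose V ** V = transpose U ** (Q ** transpose Q) ** U"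
    by (simp only: tV) (simp add: V_def matrix_mul_assoc)
  then have VV: "transpose V ** V = mat 1" using QQ UtU by simp
  have AV: "A ** V = V ** S"
  proof -
    have "A ** V = transpose (Q ** transpose A) ** U" unfolding V_def
      by (simp add: matrix_transpose_mul matrix_mul_assoc)
    also have "\<dots> = transpose Q ** (transpose M ** U)" using As QA
      by (simp add: matrix_transpose_mul matrix_mul_assoc)
    also have "\<dots> = V ** S" using Ms MU2 unfolding V_def by (simp add: matrix_mul_assoc)
    finally show ?thesis .
  qed
  have col: "\<forall>i. A *v column i V = S $ i $ i *\<^sub>R column i V"
    using AV column_mult diag_column[OF Sd] by metis
  have "W = U ** S ** transpose V"
  proof -
    have "W = M ** Q" using MQ by simp
    also have "\<dots> = U ** S ** (transpose U ** Q)" unfolding MU by (simp add: matrix_mul_assoc)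
    finally show ?thesis using tV by simp
  qed
  then show "\<exists>(U :: real^'k^'k) (V :: real^'k^'n) (S :: real^'k^'k).
       orthogonal_matrix U \<and>
       transpose V ** V = mat 1 \<and>
       (\<forall>i j. i \<noteq> j \<longrightarrow> S $ i $ j = 0) \<and>
       (\<forall>i. A *v column i V = S $ i $ i *\<^sub>R column i V) \<and>
       W = U ** S ** transpose V \<and>
       M = U ** S ** transpose U" using oU VV Sd col MU by blast
next
  have As: "transpose A = A" and Ap: "\<forall>x. x \<noteq> 0 \<longrightarrow> x \<bullet> (A *v x) > 0"
    using assms(3) unfolding sym_pos_def_def by auto
  assume "\<exists>(U :: real^'k^'k) (V :: real^'k^'n) (S :: real^'k^'k).
       orthogonal_matrix U \<and>
       transpose V ** V = mat 1 \<and>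
       (\<forall>i j. i \<noteq> j \<longrightarrow> S $ i $ j = 0) \<and>
       (\<forall>i. A *v column i V = S $ i $ i *\<^sub>R column i V) \<and>
       W = U ** S ** transpose V \<and>
       M = U ** S ** transpose U"
  then obtain U V S where oU: "orthogonal_matrix (U :: real^'k^'k)" and VV: "transpose V ** V = mat 1"
    and Sd: "\<forall>i j. i \<noteq> j \<longrightarrow> S $ i $ j = (0::real)"
    and col: "\<forall>i. A *v column i V = S $ i $ i *\<^sub>R column i V"
    and WU: "W = U ** S ** transpose V" and MU: "M = U ** S ** transpose U" by blast
  have UtU: "transpose U ** U = mat 1" and UUt: "U ** transpose U = mat 1"
    using oU unfolding orthogonal_matrix_def by auto
  have St: "transpose S = S" using diag_transpose[OF Sd] .
  have AV: "A ** V = V ** S"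
    by (rule column_eq) (simp add: column_mult diag_column[OF Sd] col)
  have Spos: "S $ i $ i > 0" for i
  proof -
    define c where "c = column i V"
    have "(transpose V ** V) $ i $ i = c \<bullet> c" by (simp add: matrix_mult_transpose_dot_column c_def)
    then have cc: "c \<bullet> c = 1" using VV by (simp add: mat_def)
    then have "c \<noteq> 0" by auto
    then have "0 < c \<bullet> (A *v c)" using Ap by blast
    also have "\<dots> = S $ i $ i" using col cc unfolding c_def by simp
    finally show ?thesis .
  qed
  have Mpos: "sym_pos_def M"
    unfolding sym_pos_def_def
  proof (intro conjI allI impI)
    show "transpose M = M" unfolding MU by (simp add: matrix_transpose_mul St matrix_mul_assoc)
    fix x :: "real^'k" assume x0: "x \<noteq> 0"
    define y where "y = transpose U *v x"
    have "U *v y = x" unfolding y_def by (simp only: matrix_vector_mul_assoc UUt matrix_vector_mul_lid)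
    then have y0: "y \<noteq> 0" using x0 by auto
    then obtain j where yj: "y $ j \<noteq> 0" by (metis vec_eq_iff zero_index)
    have Sy: "(S *v y) $ l = S $ l $ l * y $ l" for l
    proof -
      have "(S *v y) $ l = (\<Sum>m\<in>UNIV. S $ l $ m * y $ m)" by (simp add: matrix_vector_mult_def)
      also have "\<dots> = (\<Sum>m\<in>UNIV. if m = l then S $ l $ l * y $ l else 0)"
        by (rule sum.cong) (auto simp: Sd)
      finally show ?thesis by simp
    qed
    have "x \<bullet> (M *v x) = y \<bullet> (S *v y)"
    proof -
      have "M *v x = U *v (S *v y)" unfolding MU y_def by (simp only: matrix_vector_mul_assoc matrix_mul_assoc)
      then have "x \<bullet> (M *v x) = (x v* U) \<bullet> (S *v y)" by (simp add: dot_lmul_matrix)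
      then show ?thesis unfolding y_def by simp
    qed
    also have "\<dots> = (\<Sum>l\<in>UNIV. S $ l $ l * (y $ l * y $ l))"
      by (simp add: inner_vec_def Sy algebra_simps)
    also have "\<dots> > 0"
    proof (rule sum_pos2[of UNIV j])
      show "0 < S $ j $ j * (y $ j * y $ j)" using Spos[of j] yj by (metis mult_pos_pos not_real_square_gt_zero)
      show "0 \<le> S $ l $ l * (y $ l * y $ l)" for l using Spos[of l] by simp
    qed auto
    finally show "x \<bullet> (M *v x) > 0" .
  qed
  define Mi where "Mi = matrix_inv M"
  have MMi: "M ** Mi = mat 1" and MiM: "Mi ** M = mat 1"
    using inv_props[OF sym_pos_invertible[OF Mpos]] Mi_def by auto
  have VtA: "transpose V ** A = S ** transpose V"
    using AV As St by (metis matrix_transpose_mul)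
  have WA: "W ** A = M ** W"
  proof -
    have "W ** A = U ** S ** (transpose V ** A)" unfolding WU by (simp add: matrix_mul_assoc)
    also have "\<dots> = U ** S ** (S ** transpose V)" by (simp only: VtA)
    also have "\<dots> = U ** S ** ((transpose U ** U) ** (S ** transpose V))" by (simp add: UtU)
    also have "\<dots> = (U ** S ** transpose U) ** (U ** S ** transpose V)" by (simp add: matrix_mul_assoc)
    finally show ?thesis unfolding MU WU .
  qed
  have e1: "Mi ** W ** A = W"
  proof -
    have "Mi ** W ** A = Mi ** (W ** A)" by (simp add: matrix_mul_assoc)
    also have "\<dots> = (Mi ** M) ** W" by (simp add: WA matrix_mul_assoc)
    finally show ?thesis by (simp add: MiM)
  qed
  have WW: "W ** transpose W = M ** M"
  proof -
    have "W ** transpose W = U ** S ** (transpose V ** V) ** S ** transpose U"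
      unfolding WU by (simp add: matrix_transpose_mul St matrix_mul_assoc)
    also have "\<dots> = U ** S ** (transpose U ** U) ** S ** transpose U" by (simp add: VV UtU)
    also have "\<dots> = (U ** S ** transpose U) ** (U ** S ** transpose U)" by (simp add: matrix_mul_assoc)
    finally show ?thesis unfolding MU .
  qed
  have e2: "Mi ** W ** A ** transpose W ** Mi = M"
  proof -
    have "Mi ** W ** A ** transpose W ** Mi = W ** transpose W ** Mi" by (simp add: e1)
    also have "\<dots> = M ** (M ** Mi)" by (simp add: WW matrix_mul_assoc)
    finally show ?thesis by (simp add: MMi)
  qed
  show "(W, M) \<in> equilibria A" unfolding equilibria_def using Mpos e1 e2 Mi_def by simp
qed

end
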